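(* Consider the three-door Monty Hall game described in the context as a zero-sum game in which Conie's payoff is her winning indicator. Let $P^*$ be Conie's mixed strategy assigning probability $1/3$ to each of $1\,\mathrm{s}\,\mathrm{s}$, $2\,\mathrm{s}\,\mathrm{s}$, $3\,\mathrm{s}\,\mathrm{s}$, and let $Q^*_{1,1,1}$ be Monte's mixed strategy assigning probability $1/3$ to each of $(1,2)$, $(2,1)$, $(3,1)$. Then the value of the game is $V=\max_P\min_Q W(P,Q)=\min_Q\max_P W(P,Q)=2/3$, where $W(P,Q)$ is Conie's winning probability, and $(P^*,Q^*_{1,1,1})$ is a minimax solution (saddle point). Moreover $P^*$ is equalizing: $W(P^*,Q)=2/3$ for every mixed strategy $Q$ of Monte.
   Context: Doors are numbered $1,2,3$. A pure strategy of Monte is a pair $(\theta,d)$ with $\theta\in\{1,2,3\}$ (the door hiding the prize) and $d\in\{1,2,3\}\setminus\{\theta\}$ (six strategies). A pure strategy of Conie is a triple $x\,a\,b$ with $x\in\{1,2,3\}$ and $a,b\in\{\mathrm{h},\mathrm{s}\}$ (twelve strategies). Under the profile $((\theta,d),x\,a\,b)$: Monte offers door $y=\theta$ if $x\neq\theta$ and $y=d$ if $x=\theta$; Conie's action is $a$ if $y$ is the smaller of the two doors in $\{1,2,3\}\setminus\{x\}$ and $b$ otherwise; her final choice is $z=x$ for action $\mathrm{h}$ and $z=y$ for action $\mathrm{s}$; she wins (payoff 1) iff $z=\theta$, else payoff 0, and Monte's payoff is the negative of Conie's. Mixed strategies are probability distributions on pure strategies, played independently; $W(P,Q)$ is the resulting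 probability that Conie wins. A profile $(P^*,Q^* )$ is a minimax solution if $W(P^*,Q^* )=\max_P W(P,Q^* )=\min_Q W(P^*,Q)$. *)

theory Defs
  imports Complex_Main
begin

datatype act = Hold | Switch

type_synonym monte_strat = "nat \<times> nat"
type_synonym conie_strat = "nat \<times> act \<times> act"

definition doors :: "nat set" where "doors = {1,2,3}"

definition MonteS :: "monte_strat set" where
  "MonteS = {(\<theta>, d). \<theta> \<in> doors \<and> d \<in> doors - {\<theta>}}"

definition ConieS :: "conie_strat set" where
  "ConieS = {(x, a, b). x \<in> doors}"

definition offer :: "monte_strat \<Rightarrow> conie_strat \<Rightarrow> nat" where
  "offer m c = (case m of (\<theta>, d) \<Rightarrow> case c of (x, a, b) \<Rightarrow>
      if x \<noteq> \<theta> then \<theta> else d)"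

definition action :: "monte_strat \<Rightarrow> conie_strat \<Rightarrow> act" where
  "action m c = (case c of (x, a, b) \<Rightarrow>
      if offer m c = Min (doors - {x}) then a else b)"

definition final_choice :: "monte_strat \<Rightarrow> conie_strat \<Rightarrow> nat" where
  "final_choice m c = (case c of (x, a, b) \<Rightarrow>
      (case action m c of Hold \<Rightarrow> x | Switch \<Rightarrow> offer m c))"

definition win :: "conie_strat \<Rightarrow> monte_strat \<Rightarrow> real" where
  "win c m = (if final_choice m c = fst m then 1 else 0)"

definition MixC :: "(conie_strat \<Rightarrow> real) set" where
  "MixC = {P. (\<forall>c. 0 \<le> P c) \<and> (\<forall>c. c \<notin> ConieS \<longrightarrow> P c = 0) \<and> sum P ConieS = 1}"

definition MixM :: "(monte_strat \<Rightarrow> real) set" where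
  "MixM = {Q. (\<forall>m. 0 \<le> Q m) \<and> (\<forall>m. m \<notin> MonteS \<longrightarrow> Q m = 0) \<and> sum Q MonteS = 1}"

definition W :: "(conie_strat \<Rightarrow> real) \<Rightarrow> (monte_strat \<Rightarrow> real) \<Rightarrow> real" where
  "W P Q = (\<Sum>c\<in>ConieS. \<Sum>m\<in>MonteS. P c * Q m * win c m)"

definition minimax_solution :: "(conie_strat \<Rightarrow> real) \<Rightarrow> (monte_strat \<Rightarrow> real) \<Rightarrow> bool" where
  "minimax_solution P Q \<longleftrightarrow> P \<in> MixC \<and> Q \<in> MixM \<and>
     (\<forall>P'\<in>MixC. W P' Q \<le> W P Q) \<and> (\<forall>Q'\<in>MixM. W P Q \<le> W P Q')"

definition Pstar :: "conie_strat \<Rightarrow> real" where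
  "Pstar c = (if c \<in> {(1, Switch, Switch), (2, Switch, Switch), (3, Switch, Switch)} then 1/3 else 0)"

definition Qstar111 :: "monte_strat \<Rightarrow> real" where
  "Qstar111 m = (if m \<in> {(1,2), (2,1), (3,1)} then 1/3 else 0)"

end

theory Submission
  imports Defs
begin

lemma MonteS_eq: "MonteS = {(1,2),(1,3),(2,1),(2,3),(3,1),(3,2)}"
  by (auto simp: MonteS_def doors_def)

lemma ConieS_eq: "ConieS = {(x,a,b). x \<in> {1,2,3} \<and> a \<in> {Hold,Switch} \<and> b \<in> {Hold,Switch}}"
  unfolding ConieS_def doors_def by (auto intro: act.exhaust)

lemma ConieS_fin: "finite ConieS"
proof -
  have "ConieS = {1,2,3::nat} \<times> ({Hold,Switch} \<times> {Hold,Switch})"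
    unfolding ConieS_eq by auto
  moreover have "finite ({1,2,3::nat} \<times> ({Hold,Switch} \<times> {Hold,Switch}))" by simp
  ultimately show ?thesis by (simp only:)
qed

lemma MonteS_fin: "finite MonteS" by (simp add: MonteS_eq)

lemma win_01: "0 \<le> win c m \<and> win c m \<le> 1" by (simp add: win_def)

lemma W_alt: "W P Q = (\<Sum>m\<in>MonteS. Q m * (\<Sum>c\<in>ConieS. P c * win c m))"
  unfolding W_def by (subst sum.swap) (simp add: sum_distrib_left algebra_simps)

lemma W_alt2: "W P Q = (\<Sum>c\<in>ConieS. P c * (\<Sum>m\<in>MonteS. Q m * win c m))"
  unfolding W_def by (simp add: sum_distrib_left algebra_simps)

lemma Pstar_col: "m \<in> MonteS \<Longrightarrow> (\<Sum>c\<in>ConieS. Pstar c * win c m) = 2/3"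
proof -
  have "(\<Sum>c\<in>ConieS. Pstar c * win c m) = (\<Sum>c\<in>{(1, Switch, Switch), (2, Switch, Switch), (3, Switch, Switch)}. Pstar c * win c m)"
    by (rule sum.mono_neutral_right) (use ConieS_fin in \<open>auto simp: ConieS_def doors_def Pstar_def\<close>)
  moreover assume "m \<in> MonteS"
  ultimately show ?thesis
    by (auto simp: MonteS_eq Pstar_def win_def final_choice_def action_def offer_def doors_def)
qed

lemma Qstar_row: "c \<in> ConieS \<Longrightarrow> (\<Sum>m\<in>MonteS. Qstar111 m * win c m) \<le> 2/3"
proof -
  have "(\<Sum>m\<in>MonteS. Qstar111 m * win c m) = (\<Sum>m\<in>{(1,2),(2,1),(3,1)}. Qstar111 m * win c m)"
    by (rule sum.mono_neutral_right) (auto simp: MonteS_eq Qstar111_def)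
  moreover assume "c \<in> ConieS"
  ultimately show ?thesis
    by (auto simp: ConieS_eq Qstar111_def win_def final_choice_def action_def offer_def doors_def
        split: act.splits)
qed

lemma W_Pstar: "Q \<in> MixM \<Longrightarrow> W Pstar Q = 2/3"
proof -
  assume Q: "Q \<in> MixM"
  have "W Pstar Q = (\<Sum>m\<in>MonteS. Q m * (2/3))" unfolding W_alt by (simp add: Pstar_col)
  also have "\<dots> = 2/3" using Q by (simp only: sum_distrib_right[symmetric]) (simp add: MixM_def)
  finally show ?thesis .
qed

lemma W_Qstar: "P \<in> MixC \<Longrightarrow> W P Qstar111 \<le> 2/3"
proof -
  assume P: "P \<in> MixC"
  have "W P Qstar111 \<le> (\<Sum>c\<in>ConieS. P c * (2/3))"
    unfolding W_alt2 using P by (intro sum_mono mult_left_mono Qstar_row) (auto simp: MixC_def)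
  also have "\<dots> = 2/3" using P by (simp only: sum_distrib_right[symmetric]) (simp add: MixC_def)
  finally show ?thesis .
qed

lemma W_nonneg: "P \<in> MixC \<Longrightarrow> Q \<in> MixM \<Longrightarrow> 0 \<le> W P Q"
  unfolding W_def MixC_def MixM_def by (intro sum_nonneg) (auto simp: win_def)

lemma W_le1: "P \<in> MixC \<Longrightarrow> Q \<in> MixM \<Longrightarrow> W P Q \<le> 1"
proof -
  assume P: "P \<in> MixC" and Q: "Q \<in> MixM"
  have "W P Q \<le> (\<Sum>c\<in>ConieS. \<Sum>m\<in>MonteS. P c * Q m)"
    unfolding W_def using P Q
    by (intro sum_mono) (auto simp: MixC_def MixM_def win_def)
  also have "\<dots> = sum P ConieS * sum Q MonteS" by (simp add: sum_product)
  also have "\<dots> = 1" using P Q by (simp add: MixC_def MixM_def)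
  finally show ?thesis .
qed

lemma Pstar_in: "Pstar \<in> MixC"
proof -
  have "sum Pstar ConieS = (\<Sum>c\<in>{(1, Switch, Switch), (2, Switch, Switch), (3, Switch, Switch)}. Pstar c)"
    by (rule sum.mono_neutral_right) (use ConieS_fin in \<open>auto simp: ConieS_def doors_def Pstar_def\<close>)
  thus ?thesis by (auto simp: MixC_def Pstar_def ConieS_def doors_def)
qed

lemma Qstar_in: "Qstar111 \<in> MixM"
  by (auto simp: MixM_def Qstar111_def MonteS_eq)

theorem mainTheorem6:
  shows "(SUP P\<in>MixC. INF Q\<in>MixM. W P Q) = 2/3
     \<and> (INF Q\<in>MixM. SUP P\<in>MixC. W P Q) = 2/3
     \<and> minimax_solution Pstar Qstar111
     \<and> W Pstar Qstar111 = 2/3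
     \<and> (\<forall>Q\<in>MixM. W Pstar Q = 2/3)"
proof -
  have bb: "bdd_below ((\<lambda>Q. W P Q) ` MixM)" if "P \<in> MixC" for P
    using W_nonneg[OF that] by (intro bdd_belowI[of _ 0]) auto
  have ba: "bdd_above ((\<lambda>P. W P Q) ` MixC)" if "Q \<in> MixM" for Q
    using W_le1[OF _ that] by (intro bdd_aboveI[of _ 1]) auto
  have inf_le: "(INF Q\<in>MixM. W P Q) \<le> 2/3" if "P \<in> MixC" for P
    using cINF_lower[OF bb[OF that] Qstar_in] W_Qstar[OF that] by linarith
  have infP: "(INF Q\<in>MixM. W Pstar Q) = 2/3"
  proof -
    have "(INF Q\<in>MixM. W Pstar Q) = (INF Q\<in>MixM. (2/3::real))"
      using W_Pstar by (intro INF_cong) auto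
    also have "\<dots> = 2/3" using Qstar_in by (metis cINF_const empty_iff)
    finally show ?thesis .
  qed
  have sup_ge: "(SUP P\<in>MixC. W P Q) \<ge> 2/3" if "Q \<in> MixM" for Q
    using cSUP_upper[OF Pstar_in ba[OF that]] W_Pstar[OF that] by linarith
  have supQ: "(SUP P\<in>MixC. W P Qstar111) \<le> 2/3"
    using Pstar_in by (intro cSUP_least) (use W_Qstar in auto)
  have 1: "(SUP P\<in>MixC. INF Q\<in>MixM. W P Q) = 2/3"
  proof (rule antisym)
    show "(SUP P\<in>MixC. INF Q\<in>MixM. W P Q) \<le> 2/3"
      using Pstar_in by (intro cSUP_least) (use inf_le in auto)
    have "bdd_above ((\<lambda>P. INF Q\<in>MixM. W P Q) ` MixC)"
      using inf_le by (intro bdd_aboveI[of _ "2/3"]) auto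
    from cSUP_upper[OF Pstar_in this] infP
    show "2/3 \<le> (SUP P\<in>MixC. INF Q\<in>MixM. W P Q)" by simp
  qed
  have 2: "(INF Q\<in>MixM. SUP P\<in>MixC. W P Q) = 2/3"
  proof (rule antisym)
    show "2/3 \<le> (INF Q\<in>MixM. SUP P\<in>MixC. W P Q)"
      using Qstar_in by (intro cINF_greatest) (use sup_ge in auto)
    have "bdd_below ((\<lambda>Q. SUP P\<in>MixC. W P Q) ` MixM)"
      using sup_ge by (intro bdd_belowI[of _ "2/3"]) auto
    from cINF_lower[OF this Qstar_in] supQ
    show "(INF Q\<in>MixM. SUP P\<in>MixC. W P Q) \<le> 2/3" by simp
  qed
  have 3: "minimax_solution Pstar Qstar111"
  proof -
    have e: "W Pstar Qstar111 = 2/3" by (rule W_Pstar[OF Qstar_in])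
    have a: "\<forall>P'\<in>MixC. W P' Qstar111 \<le> W Pstar Qstar111"
      unfolding e using W_Qstar by blast
    have b: "\<forall>Q'\<in>MixM. W Pstar Qstar111 \<le> W Pstar Q'"
    proof
      fix Q' assume "Q' \<in> MixM"
      from W_Pstar[OF this] e show "W Pstar Qstar111 \<le> W Pstar Q'" by linarith
    qed
    show ?thesis unfolding minimax_solution_def using Pstar_in Qstar_in a b by blast
  qed
  show ?thesis using 1 2 3 W_Pstar Qstar_in by auto
qed

end
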